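(* Let $a\in BC(\mathbf{R})$, $a\ge0$, with $a(x)\ge\varepsilon_1>0$ for $|x|\ge L$ ($L>0$), and let $V\in BC^1(\mathbf{R})$ with $V>0$ and $V'(x)x\le0$ on $\mathbf{R}$. Let $\phi(x)=\varepsilon_1$ for $|x|\le L$, $\phi(x)=L\varepsilon_1/|x|$ for $|x|\ge L$, $\alpha=\varepsilon_1/4$, and for $k>0$ and a solution $u$ define \[G_k(t):=\int_{\mathbf{R}}u_t\,\phi(x)\,x\,u_x\,dx+\alpha(u_t(t,\cdot),u(t,\cdot))+\frac{\alpha}{2}\int_{\mathbf{R}}a(x)|u(t,x)|^2dx+kE_u(t).\] Then there is a constant $C^*>0$ depending only on $L$ such that, if $V(0)<1/(4C^* )$, then for all sufficiently large $k\ge2$ there exist constants $\eta_0>0$ and $C>0$ such that for every $[u_0,u_1]\in C_0^\infty(\mathbf{R})\times C_0^\infty(\mathbf{R})$ the corresponding smooth solution $u$ of $u_{tt}-u_{xx}+V(x)u+a(x)u_t=0$, $u(0)=u_0$, $u_t(0)=u_1$ satisfies \[G_k(t)+\eta_0\int_0^tE_u(s)\,ds\le C\Big(\|u_0\|_{H^1}^2+\|u_1\|^2+\int_0^t\!\!\int_{\mathbf{R}}a(x)|u(s,x)|^2dx\,ds\Big)\quad(t\ge0).\]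
   Context: $\|\cdot\|$ and $(\cdot,\cdot)$ denote the $L^2(\mathbf{R})$ norm and inner product. $E_u(t)=\frac12(\|u_t\|^2+\|u_x\|^2+\|\sqrt V u\|^2)$. $BC$, $BC^1$ denote bounded continuous functions and $C^1$ functions with bounded continuous derivative. *)

theory Defs
  imports "HOL-Analysis.Analysis"
begin

definition L2sq :: "(real \<Rightarrow> real) \<Rightarrow> real" where
  "L2sq f = (LINT x|lborel. (f x)^2)"

definition L2inner :: "(real \<Rightarrow> real) \<Rightarrow> (real \<Rightarrow> real) \<Rightarrow> real" where
  "L2inner f g = (LINT x|lborel. f x * g x)"

definition smooth_compact :: "(real \<Rightarrow> real) \<Rightarrow> bool" where
  "smooth_compact f \<longleftrightarrow>
     (\<forall>n x. ((deriv ^^ n) f) differentiable (at x)) \<and>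
     (\<exists>R. \<forall>x. \<bar>x\<bar> > R \<longrightarrow> f x = 0)"

definition BC :: "(real \<Rightarrow> real) \<Rightarrow> bool" where
  "BC f \<longleftrightarrow> continuous_on UNIV f \<and> bounded (range f)"

definition BC1 :: "(real \<Rightarrow> real) \<Rightarrow> bool" where
  "BC1 f \<longleftrightarrow> f differentiable_on UNIV \<and> BC f \<and> BC (deriv f)"

definition phi :: "real \<Rightarrow> real \<Rightarrow> real \<Rightarrow> real" where
  "phi L \<epsilon>1 x = (if \<bar>x\<bar> \<le> L then \<epsilon>1 else L * \<epsilon>1 / \<bar>x\<bar>)"

definition is_solution ::
  "(real \<Rightarrow> real) \<Rightarrow> (real \<Rightarrow> real) \<Rightarrow> (real \<Rightarrow> real) \<Rightarrow> (real \<Rightarrow> real) \<Rightarrow>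
   (real \<Rightarrow> real \<Rightarrow> real) \<Rightarrow> (real \<Rightarrow> real \<Rightarrow> real) \<Rightarrow> (real \<Rightarrow> real \<Rightarrow> real) \<Rightarrow> bool" where
  "is_solution V a u0 u1 u ut ux \<longleftrightarrow>
     (\<exists>utt utx uxt uxx.
       (\<forall>t x. ((\<lambda>s. u s x) has_real_derivative ut t x) (at t)) \<and>
       (\<forall>t x. ((\<lambda>y. u t y) has_real_derivative ux t x) (at x)) \<and>
       (\<forall>t x. ((\<lambda>s. ut s x) has_real_derivative utt t x) (at t)) \<and>
       (\<forall>t x. ((\<lambda>y. ut t y) has_real_derivative utx t x) (at x)) \<and>
       (\<forall>t x. ((\<lambda>s. ux s x) has_real_derivative uxt t x) (at t)) \<and>
       (\<forall>t x. ((\<lambda>y. ux t y) has_real_derivative uxx t x) (at x)) \<and>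
       continuous_on UNIV (\<lambda>(t,x). u t x) \<and>
       continuous_on UNIV (\<lambda>(t,x). ut t x) \<and>
       continuous_on UNIV (\<lambda>(t,x). ux t x) \<and>
       continuous_on UNIV (\<lambda>(t,x). utt t x) \<and>
       continuous_on UNIV (\<lambda>(t,x). utx t x) \<and>
       continuous_on UNIV (\<lambda>(t,x). uxt t x) \<and>
       continuous_on UNIV (\<lambda>(t,x). uxx t x) \<and>
       (\<forall>t x. utt t x - uxx t x + V x * u t x + a x * ut t x = 0) \<and>
       (\<forall>x. u 0 x = u0 x) \<and> (\<forall>x. ut 0 x = u1 x) \<and>
       (\<forall>t\<ge>0. \<exists>R. \<forall>x. \<bar>x\<bar> > R \<longrightarrow> u t x = 0))"

definition energy :: "(real \<Rightarrow> real) \<Rightarrow> (real \<Rightarrow> real \<Rightarrow> real) \<Rightarrow> (real \<Rightarrow> real \<Rightarrow> real) \<Rightarrow>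
    (real \<Rightarrow> real \<Rightarrow> real) \<Rightarrow> real \<Rightarrow> real" where
  "energy V u ut ux t =
     (L2sq (ut t) + L2sq (ux t) + L2sq (\<lambda>x. sqrt (V x) * u t x)) / 2"

definition Gk :: "real \<Rightarrow> real \<Rightarrow> (real \<Rightarrow> real) \<Rightarrow> (real \<Rightarrow> real) \<Rightarrow> real \<Rightarrow>
    (real \<Rightarrow> real \<Rightarrow> real) \<Rightarrow> (real \<Rightarrow> real \<Rightarrow> real) \<Rightarrow> (real \<Rightarrow> real \<Rightarrow> real) \<Rightarrow> real \<Rightarrow> real" where
  "Gk L \<epsilon>1 a V k u ut ux t =
     (let \<alpha> = \<epsilon>1 / 4 in
       (LINT x|lborel. ut t x * phi L \<epsilon>1 x * x * ux t x)
       + \<alpha> * L2inner (ut t) (u t)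
       + \<alpha> / 2 * (LINT x|lborel. a x * (u t x)^2)
       + k * energy V u ut ux t)"

end

theory Submission
  imports Defs
begin


lemma cont_slice2:
  fixes f :: "real \<Rightarrow> real \<Rightarrow> real"
  assumes "continuous_on UNIV (\<lambda>(\<tau>,x). f \<tau> x)"
  shows "continuous_on S (f \<tau>)"
proof -
  have "continuous_on S ((\<lambda>(\<tau>,x). f \<tau> x) \<circ> (\<lambda>x. (\<tau>, x)))"
    by (rule continuous_on_compose[OF _ continuous_on_subset[OF assms]]) (auto intro!: continuous_intros)
  then show ?thesis by (simp add: o_def)
qed

lemma cont_slice1:
  fixes f :: "real \<Rightarrow> real \<Rightarrow> real"
  assumes "continuous_on UNIV (\<lambda>(\<tau>,x). f \<tau> x)"
  shows "continuous_on S (\<lambda>\<tau>. f \<tau> x)"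
proof -
  have "continuous_on S ((\<lambda>(\<tau>,x). f \<tau> x) \<circ> (\<lambda>\<tau>. (\<tau>, x)))"
    by (rule continuous_on_compose[OF _ continuous_on_subset[OF assms]]) (auto intro!: continuous_intros)
  then show ?thesis by (simp add: o_def)
qed

lemma decay_lemma:
  fixes f ft g Fl Fl' :: "real \<Rightarrow> real \<Rightarrow> real"
  assumes T: "T0 \<le> T1" and ab: "a \<le> b"
  and df: "\<And>\<tau> x. ((\<lambda>\<tau>. f \<tau> x) has_real_derivative ft \<tau> x) (at \<tau>)"
  and cf: "continuous_on UNIV (\<lambda>(\<tau>,x). f \<tau> x)"
  and cft: "continuous_on UNIV (\<lambda>(\<tau>,x). ft \<tau> x)"
  and cg: "continuous_on UNIV (\<lambda>(\<tau>,x). g \<tau> x)"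
  and S: "finite S"
  and dFl: "\<And>\<tau> x. \<tau> \<in> {T0..T1} \<Longrightarrow> x \<in> {a<..<b} - S \<Longrightarrow> ((Fl \<tau>) has_real_derivative Fl' \<tau> x) (at x)"
  and cFl: "\<And>\<tau>. \<tau> \<in> {T0..T1} \<Longrightarrow> continuous_on {a..b} (Fl \<tau>)"
  and Fla: "\<And>\<tau>. \<tau> \<in> {T0..T1} \<Longrightarrow> Fl \<tau> a = 0"
  and Flb: "\<And>\<tau>. \<tau> \<in> {T0..T1} \<Longrightarrow> Fl \<tau> b = 0"
  and le: "\<And>\<tau> x. \<tau> \<in> {T0..T1} \<Longrightarrow> x \<in> {a<..<b} - S \<Longrightarrow> ft \<tau> x \<le> Fl' \<tau> x + g \<tau> x"
  shows "integral {a..b} (f T1) - integral {a..b} (f T0) \<le> integral {T0..T1} (\<lambda>\<tau>. integral {a..b} (g \<tau>))"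
proof -
  define Fi where "Fi \<tau> = integral {a..b} (f \<tau>)" for \<tau>
  define Gi where "Gi \<tau> = integral {a..b} (g \<tau>)" for \<tau>
  have cGi: "continuous_on UNIV Gi"
    unfolding Gi_def using integral_continuous_on_param[of UNIV a b g] continuous_on_subset[OF cg]
    by (auto simp: cbox_interval)
  have dFi: "(Fi has_real_derivative integral {a..b} (ft \<tau>)) (at \<tau>)" for \<tau>
  proof -
    have "((\<lambda>x. integral (cbox a b) (f x)) has_field_derivative integral (cbox a b) (ft \<tau>)) (at \<tau> within UNIV)"
      by (rule leibniz_rule_field_derivative[of UNIV a b f ft])
        (auto intro!: integrable_continuous_real cont_slice2[OF cf] continuous_on_subset[OF cft] df simp: cbox_interval)
    then show ?thesis by (simp add: Fi_def[abs_def] cbox_interval)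
  qed
  have leI: "integral {a..b} (ft \<tau>) \<le> Gi \<tau>" if \<tau>: "\<tau> \<in> {T0..T1}" for \<tau>
  proof -
    have "((\<lambda>x. Fl' \<tau> x) has_integral (Fl \<tau> b - Fl \<tau> a)) {a..b}"
      by (rule fundamental_theorem_of_calculus_interior_strong[OF S ab])
        (auto simp: has_real_derivative_iff_has_vector_derivative[symmetric] intro!: dFl \<tau> cFl)
    then have h0: "((\<lambda>x. Fl' \<tau> x) has_integral 0) {a..b}" using Fla[OF \<tau>] Flb[OF \<tau>] by simp
    have hg: "(g \<tau> has_integral Gi \<tau>) {a..b}"
      unfolding Gi_def by (intro integrable_integral integrable_continuous_real cont_slice2[OF cg])
    define k where "k x = (if x \<in> S \<union> {a,b} then ft \<tau> x else Fl' \<tau> x + g \<tau> x)" for x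
    have hk: "(k has_integral Gi \<tau>) {a..b}"
      by (rule has_integral_spike_finite[of "S \<union> {a,b}" _ _ "\<lambda>x. Fl' \<tau> x + g \<tau> x"])
        (use S in \<open>auto simp: k_def intro: has_integral_add[OF h0 hg, simplified]\<close>)
    have hft: "(ft \<tau> has_integral integral {a..b} (ft \<tau>)) {a..b}"
      by (intro integrable_integral integrable_continuous_real cont_slice2[OF cft])
    show ?thesis
      by (rule has_integral_le[OF hft hk]) (auto simp: k_def intro!: le[OF \<tau>])
  qed
  define H where "H \<tau> = Fi \<tau> - integral {T0..\<tau>} Gi" for \<tau>
  have dI: "((\<lambda>x. integral {T0..x} Gi) has_real_derivative Gi \<tau>) (at \<tau> within {T0..T1})" if "\<tau> \<in> {T0..T1}" for \<tau>
    by (rule integral_has_real_derivative[OF continuous_on_subset[OF cGi] that]) auto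
  have "H T1 \<le> H T0"
  proof (rule DERIV_nonpos_imp_decreasing_open[OF T])
    fix x assume x: "T0 < x" "x < T1"
    then have "x \<in> interior {T0..T1}" by auto
    then have "((\<lambda>x. integral {T0..x} Gi) has_real_derivative Gi x) (at x)"
      using dI[of x] x at_within_interior[of x "{T0..T1}"] by auto
    then have "(H has_real_derivative (integral {a..b} (ft x) - Gi x)) (at x)"
      unfolding H_def by (intro DERIV_diff dFi)
    moreover have "integral {a..b} (ft x) - Gi x \<le> 0" using leI[of x] x by auto
    ultimately show "\<exists>y. (H has_real_derivative y) (at x) \<and> y \<le> 0" by blast
  next
    have "continuous_on {T0..T1} Fi"
      by (meson DERIV_continuous continuous_at_imp_continuous_on dFi)
    moreover have "continuous_on {T0..T1} (\<lambda>x. integral {T0..x} Gi)"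
      using dI by (meson DERIV_continuous continuous_on_eq_continuous_within)
    ultimately show "continuous_on {T0..T1} H" unfolding H_def by (intro continuous_intros)
  qed
  then show ?thesis using T by (simp add: H_def Fi_def Gi_def[abs_def])
qed



lemma hh_deriv: "((\<lambda>z::real. (max z 0)^2) has_real_derivative 2 * max z 0) (at z)"
proof (cases "z = 0")
  case True
  have "((\<lambda>y. ((max y 0)^2 - (max 0 0)^2) / (y - 0)) \<longlongrightarrow> 0) (at (0::real))"
  proof (rule Lim_null_comparison[where g="\<lambda>y. \<bar>y\<bar>"])
    show "\<forall>\<^sub>F x in at 0. norm (((max x 0)\<^sup>2 - (max 0 0)\<^sup>2) / (x - 0)) \<le> \<bar>x\<bar>"
      by (intro always_eventually allI) (auto simp: max_def power2_eq_square abs_mult)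
    show "((\<lambda>y::real. \<bar>y\<bar>) \<longlongrightarrow> 0) (at 0)"
      using tendsto_rabs[OF tendsto_ident_at[of 0 UNIV]] by simp
  qed
  then show ?thesis using True by (simp add: has_field_derivative_iff)
next
  case False
  show ?thesis
  proof (cases "z > 0")
    case True
    have "((\<lambda>z::real. z^2) has_real_derivative 2 * z) (at z)"
      by (auto intro!: derivative_eq_intros)
    then have "((\<lambda>z::real. (max z 0)^2) has_real_derivative 2 * z) (at z)"
      by (rule has_field_derivative_transform_within_open[where S="{0<..}"]) (use True in auto)
    then show ?thesis using True by simp
  next
    case f2: False
    with False have "z < 0" by auto
    have "((\<lambda>z::real. 0) has_real_derivative 0) (at z)"
      by (auto intro!: derivative_eq_intros)
    then have "((\<lambda>z::real. (max z 0)^2) has_real_derivative 0) (at z)"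
      by (rule has_field_derivative_transform_within_open[where S="{..<0}"]) (use \<open>z<0\<close> in auto)
    then show ?thesis using \<open>z<0\<close> by simp
  qed
qed

lemma abs_deriv:
  fixes x m :: real
  assumes "x \<noteq> m"
  shows "((\<lambda>x. \<bar>x - m\<bar>) has_real_derivative (if m < x then 1 else -1)) (at x)"
proof (cases "m < x")
  case True
  have "((\<lambda>x. x - m) has_real_derivative 1) (at x)"
    by (auto intro!: derivative_eq_intros)
  then have "((\<lambda>x. \<bar>x - m\<bar>) has_real_derivative 1) (at x)"
    by (rule has_field_derivative_transform_within_open[where S="{m<..}"]) (use True in auto)
  then show ?thesis using True by simp
next
  case False
  with assms have "x < m" by auto
  have "((\<lambda>x. m - x) has_real_derivative -1) (at x)"
    by (auto intro!: derivative_eq_intros)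
  then have "((\<lambda>x. \<bar>x - m\<bar>) has_real_derivative -1) (at x)"
    by (rule has_field_derivative_transform_within_open[where S="{..<m}"]) (use \<open>x<m\<close> in auto)
  then show ?thesis using False by simp
qed

lemma cont_comp2:
  fixes F :: "real \<Rightarrow> real \<Rightarrow> real"
  assumes "continuous_on UNIV (\<lambda>(t,x). F t x)" "continuous_on S f" "continuous_on S g"
  shows "continuous_on S (\<lambda>p. F (f p) (g p))"
proof -
  have "continuous_on S ((\<lambda>(t,x). F t x) \<circ> (\<lambda>p. (f p, g p)))"
    by (rule continuous_on_compose[OF _ continuous_on_subset[OF assms(1)]])
      (auto intro!: continuous_intros assms(2,3))
  then show ?thesis by (simp add: o_def)
qed

lemma cont_split:
  fixes F :: "real \<Rightarrow> real \<Rightarrow> real"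
  assumes "continuous_on UNIV (\<lambda>p. F (fst p) (snd p))"
  shows "continuous_on UNIV (\<lambda>(t,x). F t x)"
  using assms by (simp add: case_prod_unfold)

lemma key_ineq:
  fixes p q w P vv b psi' e1 L A Vm k :: real
  assumes P: "\<bar>P\<bar> \<le> L*e1" and vv: "0 < vv" "vv \<le> Vm" and LV: "16*L^2*Vm < 1"
    and b: "0 \<le> b" "b \<le> A" and k: "k \<ge> 4*L^2*e1*A + 1" and e1: "e1 > 0" and L: "L > 0"
    and cs: "psi' = e1 \<or> (psi' = 0 \<and> b \<ge> e1)"
  shows "- psi' * (q^2 + p^2) / 2 - P* vv*w*q - P*b*p*q - (e1/4)* vv*w^2 + (e1/4)*p^2 - (e1/4)*q^2 - k*b*p^2
         \<le> - (e1/16) * (p^2 + q^2 + vv*w^2)"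
proof -
  have h1: "\<bar>P*b*p*q\<bar> \<le> L*e1*b*\<bar>p\<bar>*\<bar>q\<bar>"
    using P b by (simp add: abs_mult mult_right_mono)
  have h2: "L*e1*b*\<bar>p\<bar>*\<bar>q\<bar> \<le> (e1/16)*q^2 + 4*L^2*e1*b^2*p^2"
  proof -
    have "0 \<le> e1 * (\<bar>q\<bar>/4 - 2*L*b*\<bar>p\<bar>)^2" using e1 by auto
    then show ?thesis by (simp add: power2_eq_square algebra_simps)
  qed
  have h3: "b^2*p^2 \<le> A*b*p^2"
    using b by (simp add: power2_eq_square mult_right_mono mult_left_mono)
  have h3': "4*L^2*e1*(b^2*p^2) \<le> 4*L^2*e1*(A*b*p^2)"
    using h3 e1 by (intro mult_left_mono) auto
  have g1: "\<bar>P* vv*w*q\<bar> \<le> L*e1* vv*\<bar>w\<bar>*\<bar>q\<bar>"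
    using P vv by (simp add: abs_mult mult_right_mono)
  have g2: "L*e1* vv*\<bar>w\<bar>*\<bar>q\<bar> \<le> (e1/8)* vv*w^2 + 2*L^2*e1* vv*q^2"
  proof -
    have "0 \<le> (e1* vv/8) * (\<bar>w\<bar> - 4*L*\<bar>q\<bar>)^2" using e1 vv by auto
    then have "L*e1* vv*\<bar>w\<bar>*\<bar>q\<bar> \<le> (e1/8)* vv*\<bar>w\<bar>^2 + 2*L^2*e1* vv*\<bar>q\<bar>^2"
      by (simp add: power2_eq_square algebra_simps del: abs_mult_self_eq)
    then show ?thesis by simp
  qed
  have g3: "2*L^2*e1* vv*q^2 \<le> (e1/8)*q^2"
  proof -
    have "2*L^2* vv \<le> 2*L^2*Vm" using vv by (simp add: mult_left_mono)
    also have "\<dots> \<le> 1/8" using LV by simp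
    finally have "(2*L^2* vv) * (e1*q^2) \<le> (1/8) * (e1*q^2)"
      using e1 by (intro mult_right_mono) auto
    then show ?thesis by (simp add: algebra_simps)
  qed
  have kb: "(k - 4*L^2*e1*A) * b * p^2 \<ge> b*p^2"
  proof -
    have "1 * b \<le> (k - 4*L^2*e1*A) * b" using k b by (intro mult_right_mono) auto
    then have "(1 * b) * p^2 \<le> ((k - 4*L^2*e1*A) * b) * p^2" by (rule mult_right_mono) auto
    then show ?thesis by simp
  qed
  define E1Q E1P E1W X Y KZ Z T M G where "E1Q = e1*q^2" and "E1P = e1*p^2" and "E1W = e1*(vv*w^2)"
    and "X = P*b*p*q" and "Y = P* vv*w*q" and "KZ = k*b*p^2" and "Z = b*p^2" and "T = L^2*e1*b^2*p^2"
    and "M = L^2*e1*A*b*p^2" and "G = L^2*e1* vv*q^2"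
  note defs = E1Q_def E1P_def E1W_def X_def Y_def KZ_def Z_def T_def M_def G_def
  have f1: "-X \<le> E1Q/16 + 4*T" using h1 h2 unfolding defs by (simp add: algebra_simps abs_le_iff)
  have f2: "T \<le> M" using h3' unfolding defs by (simp add: algebra_simps)
  have f3: "Z \<le> KZ - 4*M" using kb unfolding defs by (simp add: algebra_simps)
  have f4: "-Y \<le> E1W/8 + 2*G" using g1 g2 unfolding defs by (simp add: algebra_simps abs_le_iff)
  have f5: "2*G \<le> E1Q/8" using g3 unfolding defs by (simp add: algebra_simps)
  have z0: "0 \<le> Z" "0 \<le> E1P" "0 \<le> E1Q" "0 \<le> E1W" unfolding defs using b e1 vv by auto
  have rhs: "- (e1/16) * (p^2 + q^2 + vv*w^2) = -(E1P + E1Q + E1W)/16" unfolding defs by (simp add: algebra_simps)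
  show ?thesis
  proof (cases "psi' = e1")
    case True
    have "- psi' * (q^2 + p^2) / 2 - P* vv*w*q - P*b*p*q - (e1/4)* vv*w^2 + (e1/4)*p^2 - (e1/4)*q^2 - k*b*p^2
      = -(E1Q + E1P)/2 - Y - X - E1W/4 + E1P/4 - E1Q/4 - KZ" unfolding defs True by (simp add: algebra_simps)
    also have "\<dots> \<le> -(E1P + E1Q + E1W)/16" using f1 f2 f3 f4 f5 z0 by (simp add: field_simps)
    finally show ?thesis unfolding rhs .
  next
    case False
    then have b1: "psi' = 0" "b \<ge> e1" using cs by auto
    have "e1 * p^2 \<le> b * p^2" using b1 by (simp add: mult_right_mono)
    then have z1: "E1P \<le> Z" unfolding defs .
    have "- psi' * (q^2 + p^2) / 2 - P* vv*w*q - P*b*p*q - (e1/4)* vv*w^2 + (e1/4)*p^2 - (e1/4)*q^2 - k*b*p^2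
      = - Y - X - E1W/4 + E1P/4 - E1Q/4 - KZ" unfolding defs b1 by (simp add: algebra_simps)
    also have "\<dots> \<le> -(E1P + E1Q + E1W)/16" using f1 f2 f3 f4 f5 z0 z1 by (simp add: field_simps)
    finally show ?thesis unfolding rhs .
  qed
qed


lemma phi_alt: "L > 0 \<Longrightarrow> phi L e1 x = L*e1 / max L \<bar>x\<bar>"
  by (auto simp: phi_def max_def)

lemma cont_phi: "L > 0 \<Longrightarrow> continuous_on S f \<Longrightarrow> continuous_on S (\<lambda>p. phi L e1 (f p))"
  by (simp add: phi_alt) (intro continuous_intros, auto simp: max_def)

lemma psi_bound: "L > 0 \<Longrightarrow> e1 > 0 \<Longrightarrow> \<bar>phi L e1 x * x\<bar> \<le> L*e1"
  by (auto simp: phi_def abs_mult mult_right_mono)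

lemma psi_deriv:
  assumes L: "L > 0" and x: "x \<noteq> L" "x \<noteq> -L"
  shows "((\<lambda>x. phi L e1 x * x) has_real_derivative (if \<bar>x\<bar> < L then e1 else 0)) (at x)"
proof (cases "\<bar>x\<bar> < L")
  case True
  have "((\<lambda>x. e1 * x) has_real_derivative e1) (at x)" by (auto intro!: derivative_eq_intros)
  then have "((\<lambda>x. phi L e1 x * x) has_real_derivative e1) (at x)"
    by (rule has_field_derivative_transform_within_open[where S="{-L<..<L}"])
       (use True in \<open>auto simp: phi_def\<close>)
  then show ?thesis using True by simp
next
  case False
  then have "x > L \<or> x < -L" using x by auto
  then show ?thesis
  proof
    assume xL: "x > L"
    have "((\<lambda>x. L*e1) has_real_derivative 0) (at x)" by (auto intro!: derivative_eq_intros)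
    then have "((\<lambda>x. phi L e1 x * x) has_real_derivative 0) (at x)"
      by (rule has_field_derivative_transform_within_open[where S="{L<..}"])
         (use xL L in \<open>auto simp: phi_def\<close>)
    then show ?thesis using False by simp
  next
    assume xL: "x < -L"
    have "((\<lambda>x. -(L*e1)) has_real_derivative 0) (at x)" by (auto intro!: derivative_eq_intros)
    then have "((\<lambda>x. phi L e1 x * x) has_real_derivative 0) (at x)"
      by (rule has_field_derivative_transform_within_open[where S="{..<-L}"])
         (use xL L in \<open>auto simp: phi_def\<close>)
    then show ?thesis using False by simp
  qed
qed

definition Dd :: "real \<Rightarrow> real \<Rightarrow> (real \<Rightarrow> real) \<Rightarrow> (real \<Rightarrow> real) \<Rightarrow> real \<Rightarrow>
    (real \<Rightarrow> real \<Rightarrow> real) \<Rightarrow> (real \<Rightarrow> real \<Rightarrow> real) \<Rightarrow> (real \<Rightarrow> real \<Rightarrow> real) \<Rightarrow> real \<Rightarrow> real \<Rightarrow> real" where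
  "Dd L e1 a V k u ut ux t x = ut t x * phi L e1 x * x * ux t x + e1/4 * (ut t x * u t x)
     + e1/4/2 * (a x * (u t x)^2) + k * ((ut t x)^2 + (ux t x)^2 + V x * (u t x)^2) / 2"


lemma lint_eq:
  fixes f :: "real \<Rightarrow> real"
  assumes c: "continuous_on UNIV f" and z: "\<And>x. \<bar>x\<bar> \<ge> R \<Longrightarrow> f x = 0"
  shows "(LINT x|lborel. f x) = integral {-R..R} f"
proof -
  have eq: "f x = indicator {-R..R} x *\<^sub>R f x" for x
    using z[of x] by (cases "\<bar>x\<bar> \<ge> R") (auto simp: indicator_def abs_le_iff)
  have si: "set_integrable lborel {-R..R} f"
    unfolding set_integrable_def
    by (rule borel_integrable_compact) (auto intro: continuous_on_subset[OF c])
  have "(LINT x|lborel. f x) = (LINT x:{-R..R}|lborel. f x)"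
    unfolding set_lebesgue_integral_def by (subst eq) simp
  also have "\<dots> = integral {-R..R} f" by (rule set_borel_integral_eq_integral(2)[OF si])
  finally show ?thesis .
qed

lemma set_int_eq:
  fixes f :: "real \<Rightarrow> real"
  assumes "continuous_on {c..d} f"
  shows "(LINT x:{c..d}|lborel. f x) = integral {c..d} f"
proof -
  have si: "set_integrable lborel {c..d} f"
    unfolding set_integrable_def by (rule borel_integrable_compact) (auto intro: assms)
  show ?thesis by (rule set_borel_integral_eq_integral(2)[OF si])
qed

lemma V_max:
  fixes V V' :: "real \<Rightarrow> real"
  assumes d: "\<And>x. (V has_real_derivative V' x) (at x)" and s: "\<And>x. V' x * x \<le> 0"
  shows "V x \<le> V 0"
proof -
  have cV: "continuous_on S V" for S
    by (meson DERIV_continuous continuous_at_imp_continuous_on d)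
  show ?thesis
  proof (cases "x \<ge> 0")
    case True
    show ?thesis
    proof (rule DERIV_nonpos_imp_decreasing_open[OF True])
      fix y assume y: "0 < y" "y < x"
      have "V' y \<le> 0" using s[of y] y by (simp add: mult_le_0_iff)
      then show "\<exists>D. (V has_real_derivative D) (at y) \<and> D \<le> 0" using d by blast
    qed (rule cV)
  next
    case False
    then have x: "x \<le> 0" by simp
    show ?thesis
    proof (rule DERIV_nonneg_imp_increasing_open[OF x])
      fix y assume y: "x < y" "y < 0"
      have "V' y \<ge> 0" using s[of y] y by (simp add: mult_le_0_iff)
      then show "\<exists>D. (V has_real_derivative D) (at y) \<and> D \<ge> 0" using d by blast
    qed (rule cV)
  qed
qed

lemma init_bound:
  fixes p q w P b vv e1 L A Vm k :: real
  assumes P: "\<bar>P\<bar> \<le> L*e1" and b: "0 \<le> b" "b \<le> A" and v: "0 < vv" "vv \<le> Vm"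
    and k: "k \<ge> 0" and e1: "e1 > 0" and L: "L > 0"
  shows "p * P * q + e1/4 * (p * w) + e1/4/2 * (b * w^2) + k * (p^2 + q^2 + vv * w^2) / 2
    \<le> (L*e1 + e1 + e1*\<bar>A\<bar> + k + k*Vm + 1) * (w^2 + q^2 + p^2)"
proof -
  have pq: "2*\<bar>p\<bar>*\<bar>q\<bar> \<le> p^2 + q^2"
  proof -
    have "0 \<le> (\<bar>p\<bar> - \<bar>q\<bar>)^2" by simp
    then show ?thesis by (simp add: power2_eq_square algebra_simps del: abs_mult_self_eq)
  qed
  have pw: "2*(p*w) \<le> p^2 + w^2"
  proof -
    have "0 \<le> (p - w)^2" by simp
    then show ?thesis by (simp add: power2_eq_square algebra_simps)
  qed
  define PP QQ WW X1 X2 X3 X4 where "PP = p^2" and "QQ = q^2" and "WW = w^2" and "X1 = p * P * q"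
    and "X2 = p*w" and "X3 = b * w^2" and "X4 = vv * w^2"
  have f1: "X1 \<le> L*e1 * ((PP + QQ)/2)"
  proof -
    have "X1 \<le> \<bar>X1\<bar>" by simp
    also have "\<dots> = \<bar>P\<bar> * (\<bar>p\<bar>*\<bar>q\<bar>)" unfolding X1_def by (simp add: abs_mult)
    finally have "X1 \<le> \<bar>P\<bar> * (\<bar>p\<bar>*\<bar>q\<bar>)" .
    also have "\<dots> \<le> L*e1 * (\<bar>p\<bar>*\<bar>q\<bar>)" using P by (intro mult_right_mono) auto
    also have "\<dots> \<le> L*e1 * ((PP + QQ)/2)" using pq L e1 unfolding PP_def QQ_def by (intro mult_left_mono) auto
    finally show ?thesis .
  qed
  have f2: "2 * X2 \<le> PP + WW" using pw unfolding X2_def PP_def WW_def by simp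
  have f3: "X3 \<le> \<bar>A\<bar> * WW" unfolding X3_def WW_def using b by (intro mult_right_mono) auto
  have f4: "X4 \<le> Vm * WW" unfolding X4_def WW_def using v by (intro mult_right_mono) auto
  have nn: "0 \<le> PP" "0 \<le> QQ" "0 \<le> WW" "0 \<le> X3" "0 \<le> X4" unfolding PP_def QQ_def WW_def X3_def X4_def using b v by auto
  have lhs: "p * P * q + e1/4 * (p * w) + e1/4/2 * (b * w^2) + k * (p^2 + q^2 + vv * w^2) / 2
     = X1 + e1/4 * X2 + e1/8 * X3 + k * (PP + QQ + X4) / 2"
    unfolding PP_def QQ_def WW_def X1_def X2_def X3_def X4_def by simp
  have a1: "e1/4 * X2 \<le> e1 * (PP + WW)"
  proof -
    have "e1/4 * (2*X2) \<le> e1/4 * (PP+WW)" using f2 e1 by (intro mult_left_mono) auto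
    moreover have "e1/4 * (PP + WW) \<le> e1 * (PP+WW)" using nn e1 by (intro mult_right_mono) auto
    moreover have "e1/4 * X2 \<le> e1/4 * (2*X2) \<or> X2 < 0" using e1 by auto
    moreover have "X2 < 0 \<Longrightarrow> e1/4 * X2 \<le> 0" using e1 by (simp add: mult_nonneg_nonpos)
    moreover have "0 \<le> e1 * (PP+WW)" using nn e1 by auto
    ultimately show ?thesis by linarith
  qed
  have a2: "e1/8 * X3 \<le> e1 * \<bar>A\<bar> * WW"
  proof -
    have "e1/8 * X3 \<le> e1 * X3" using nn e1 by (intro mult_right_mono) auto
    also have "\<dots> \<le> e1 * (\<bar>A\<bar> * WW)" using f3 e1 by (intro mult_left_mono) auto
    finally show ?thesis by simp
  qed
  have a3: "k * (PP + QQ + X4) / 2 \<le> k * (PP + QQ) + k*Vm * WW"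
  proof -
    have "k * (PP + QQ + X4) \<le> k * (PP + QQ + Vm*WW)" using f4 k by (intro mult_left_mono) auto
    moreover have "k * (PP+QQ) \<ge> 0" "k*Vm*WW \<ge> 0" using k nn v by auto
    ultimately show ?thesis by (simp add: algebra_simps)
  qed
  have a0: "L*e1 * ((PP + QQ)/2) \<le> L*e1 * (PP+QQ)" using L e1 nn by (intro mult_left_mono) auto
  have rhs: "(L*e1 + e1 + e1*\<bar>A\<bar> + k + k*Vm + 1) * (w^2 + q^2 + p^2)
     = L*e1*(PP+QQ) + L*e1*WW + e1*(PP+WW) + e1*QQ + e1*\<bar>A\<bar>*WW + e1*\<bar>A\<bar>*(PP+QQ) + k*(PP+QQ) + k*WW
       + k*Vm*WW + k*Vm*(PP+QQ) + (PP+QQ+WW)"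
    unfolding PP_def QQ_def WW_def by (simp add: algebra_simps)
  have more: "0 \<le> L*e1*WW" "0 \<le> e1*QQ" "0 \<le> e1*\<bar>A\<bar>*(PP+QQ)" "0 \<le> k*WW" "0 \<le> k*Vm*(PP+QQ)"
    using L e1 nn k v by auto
  show ?thesis unfolding lhs rhs using f1 a0 a1 a2 a3 more nn by linarith
qed



locale wsol =
  fixes V a :: "real \<Rightarrow> real" and u ut ux utt utx uxt uxx :: "real \<Rightarrow> real \<Rightarrow> real"
  assumes d_ut: "\<And>t x. ((\<lambda>s. u s x) has_real_derivative ut t x) (at t)"
  and d_ux: "\<And>t x. ((\<lambda>y. u t y) has_real_derivative ux t x) (at x)"
  and d_utt: "\<And>t x. ((\<lambda>s. ut s x) has_real_derivative utt t x) (at t)"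
  and d_utx: "\<And>t x. ((\<lambda>y. ut t y) has_real_derivative utx t x) (at x)"
  and d_uxt: "\<And>t x. ((\<lambda>s. ux s x) has_real_derivative uxt t x) (at t)"
  and d_uxx: "\<And>t x. ((\<lambda>y. ux t y) has_real_derivative uxx t x) (at x)"
  and c_u: "continuous_on UNIV (\<lambda>(t,x). u t x)"
  and c_ut: "continuous_on UNIV (\<lambda>(t,x). ut t x)"
  and c_ux: "continuous_on UNIV (\<lambda>(t,x). ux t x)"
  and c_utt: "continuous_on UNIV (\<lambda>(t,x). utt t x)"
  and c_utx: "continuous_on UNIV (\<lambda>(t,x). utx t x)"
  and c_uxt: "continuous_on UNIV (\<lambda>(t,x). uxt t x)"
  and c_uxx: "continuous_on UNIV (\<lambda>(t,x). uxx t x)"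
  and pde: "\<And>t x. utt t x - uxx t x + V x * u t x + a x * ut t x = 0"
  and cV: "continuous_on UNIV V" and ca: "continuous_on UNIV a"
  and Vpos: "\<And>x. V x > 0" and apos: "\<And>x. a x \<ge> 0"
begin

lemma cu[continuous_intros]: "continuous_on S f \<Longrightarrow> continuous_on S g \<Longrightarrow> continuous_on S (\<lambda>p. u (f p) (g p))"
  by (rule cont_comp2[OF c_u])
lemma cut[continuous_intros]: "continuous_on S f \<Longrightarrow> continuous_on S g \<Longrightarrow> continuous_on S (\<lambda>p. ut (f p) (g p))"
  by (rule cont_comp2[OF c_ut])
lemma cux[continuous_intros]: "continuous_on S f \<Longrightarrow> continuous_on S g \<Longrightarrow> continuous_on S (\<lambda>p. ux (f p) (g p))"
  by (rule cont_comp2[OF c_ux])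
lemma cutt[continuous_intros]: "continuous_on S f \<Longrightarrow> continuous_on S g \<Longrightarrow> continuous_on S (\<lambda>p. utt (f p) (g p))"
  by (rule cont_comp2[OF c_utt])
lemma cutx[continuous_intros]: "continuous_on S f \<Longrightarrow> continuous_on S g \<Longrightarrow> continuous_on S (\<lambda>p. utx (f p) (g p))"
  by (rule cont_comp2[OF c_utx])
lemma cuxt[continuous_intros]: "continuous_on S f \<Longrightarrow> continuous_on S g \<Longrightarrow> continuous_on S (\<lambda>p. uxt (f p) (g p))"
  by (rule cont_comp2[OF c_uxt])
lemma cuxx[continuous_intros]: "continuous_on S f \<Longrightarrow> continuous_on S g \<Longrightarrow> continuous_on S (\<lambda>p. uxx (f p) (g p))"
  by (rule cont_comp2[OF c_uxx])
lemma cVV[continuous_intros]: "continuous_on S f \<Longrightarrow> continuous_on S (\<lambda>p. V (f p))"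
  by (rule continuous_on_compose2[OF cV]) auto
lemma caa[continuous_intros]: "continuous_on S f \<Longrightarrow> continuous_on S (\<lambda>p. a (f p))"
  by (rule continuous_on_compose2[OF ca]) auto

lemma mixed: "utx t y = uxt t y"
proof -
  define x0 where "x0 = y - 1"
  have eqI: "integral {x0..z} (uxt t) = integral {x0..z} (utx t)" if z: "x0 \<le> z" for z
  proof -
    have I: "integral {x0..z} (ux \<tau>) = u \<tau> z - u \<tau> x0" for \<tau>
    proof -
      have "(ux \<tau> has_integral (u \<tau> z - u \<tau> x0)) {x0..z}"
        by (rule fundamental_theorem_of_calculus[OF z])
          (auto simp: has_real_derivative_iff_has_vector_derivative[symmetric]
            intro!: DERIV_subset[OF d_ux])
      then show ?thesis by (rule integral_unique)
    qed
    have L: "((\<lambda>\<tau>. integral (cbox x0 z) (ux \<tau>)) has_field_derivative integral (cbox x0 z) (uxt t)) (at t within UNIV)"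
      by (rule leibniz_rule_field_derivative[of UNIV x0 z ux uxt])
        (auto intro!: integrable_continuous_real cont_slice2[OF c_ux] continuous_on_subset[OF c_uxt] d_uxt simp: cbox_interval)
    have L2: "((\<lambda>\<tau>. integral {x0..z} (ux \<tau>)) has_field_derivative (ut t z - ut t x0)) (at t)"
      unfolding I by (intro DERIV_diff d_ut)
    have "integral {x0..z} (uxt t) = ut t z - ut t x0"
      using DERIV_unique[OF L[simplified] L2] .
    moreover have "(utx t has_integral (ut t z - ut t x0)) {x0..z}"
        by (rule fundamental_theorem_of_calculus[OF z])
          (auto simp: has_real_derivative_iff_has_vector_derivative[symmetric]
            intro!: DERIV_subset[OF d_utx])
    ultimately show ?thesis by (simp add: cbox_interval integral_unique)
  qed
  have yin: "y \<in> interior {x0..y+1}" by (auto simp: x0_def)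
  have D1: "((\<lambda>z. integral {x0..z} (uxt t)) has_real_derivative uxt t y) (at y within {x0..y+1})"
    by (rule integral_has_real_derivative) (auto simp: x0_def intro!: cont_slice2[OF c_uxt])
  have D2: "((\<lambda>z. integral {x0..z} (utx t)) has_real_derivative utx t y) (at y within {x0..y+1})"
    by (rule integral_has_real_derivative) (auto simp: x0_def intro!: cont_slice2[OF c_utx])
  have D1': "((\<lambda>z. integral {x0..z} (utx t)) has_real_derivative uxt t y) (at y within {x0..y+1})"
    by (rule has_field_derivative_transform_within[OF D1, of 1]) (use eqI in \<open>auto simp: x0_def\<close>)
  show ?thesis
    using DERIV_unique[OF D2[unfolded at_within_interior[OF yin]] D1'[unfolded at_within_interior[OF yin]]] .
qed

lemma local_zero:
  assumes r: "r > 0" and s: "0 \<le> s" "s < r"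
  and z0: "\<And>y. \<bar>y - m\<bar> \<le> r \<Longrightarrow> ut 0 y = 0 \<and> ux 0 y = 0 \<and> u 0 y = 0"
  shows "ut s m = 0 \<and> ux s m = 0 \<and> u s m = 0"
proof -
  define hh where "hh z = (max z 0)^2" for z :: real
  define hd where "hd z = 2 * max z 0" for z :: real
  have dh: "(hh has_real_derivative hd z) (at z)" for z
    unfolding hh_def hd_def by (rule hh_deriv)
  define sg where "sg x = (if m < x then 1 else -1::real)" for x
  define e where "e \<tau> x = ut \<tau> x * ut \<tau> x + ux \<tau> x * ux \<tau> x + V x * (u \<tau> x * u \<tau> x)" for \<tau> x
  define et where "et \<tau> x = 2 * (ut \<tau> x * utt \<tau> x + ux \<tau> x * uxt \<tau> x + V x * (u \<tau> x * ut \<tau> x))" for \<tau> x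
  define w where "w \<tau> x = hh (r - \<tau> - \<bar>x - m\<bar>)" for \<tau> x
  define f where "f \<tau> x = w \<tau> x * e \<tau> x" for \<tau> x
  define ft where "ft \<tau> x = - hd (r - \<tau> - \<bar>x - m\<bar>) * e \<tau> x + w \<tau> x * et \<tau> x" for \<tau> x
  define Fl where "Fl \<tau> x = w \<tau> x * (2 * ut \<tau> x * ux \<tau> x)" for \<tau> x
  define Fl' where "Fl' \<tau> x = hd (r - \<tau> - \<bar>x - m\<bar>) * (- sg x) * (2 * ut \<tau> x * ux \<tau> x)
     + w \<tau> x * (2 * (utx \<tau> x * ux \<tau> x + ut \<tau> x * uxx \<tau> x))" for \<tau> x
  have chh[continuous_intros]: "continuous_on S g \<Longrightarrow> continuous_on S (\<lambda>p. hh (g p))" for S and g :: "'z::topological_space \<Rightarrow> real"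
    unfolding hh_def by (intro continuous_intros)
  have chd[continuous_intros]: "continuous_on S g \<Longrightarrow> continuous_on S (\<lambda>p. hd (g p))" for S and g :: "'z::topological_space \<Rightarrow> real"
    unfolding hd_def by (intro continuous_intros)
  have hh0: "hh z \<ge> 0" "hd z \<ge> 0" for z unfolding hh_def hd_def by auto
  have df: "((\<lambda>\<tau>. f \<tau> x) has_real_derivative ft \<tau> x) (at \<tau>)" for \<tau> x
  proof -
    have dw: "((\<lambda>\<tau>. w \<tau> x) has_real_derivative hd (r - \<tau> - \<bar>x - m\<bar>) * (-1)) (at \<tau>)"
      unfolding w_def by (rule DERIV_chain2[OF dh]) (auto intro!: derivative_eq_intros)
    have de: "((\<lambda>\<tau>. e \<tau> x) has_real_derivative et \<tau> x) (at \<tau>)"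
      unfolding e_def et_def
      by (auto intro!: derivative_eq_intros d_ut d_utt d_uxt d_ux simp: algebra_simps)
    show ?thesis unfolding f_def ft_def
      using DERIV_mult[OF dw de] by (simp add: algebra_simps)
  qed
  have cf: "continuous_on UNIV (\<lambda>(\<tau>,x). f \<tau> x)"
    unfolding f_def w_def e_def by (rule cont_split) (intro continuous_intros)
  have cft: "continuous_on UNIV (\<lambda>(\<tau>,x). ft \<tau> x)"
    unfolding ft_def w_def e_def et_def by (rule cont_split) (intro continuous_intros)
  have dFl: "((Fl \<tau>) has_real_derivative Fl' \<tau> x) (at x)" if x: "x \<in> {m-r<..<m+r} - {m}" for \<tau> x
  proof -
    have xm: "x \<noteq> m" using x by auto
    have di: "((\<lambda>x. r - \<tau> - \<bar>x - m\<bar>) has_real_derivative 0 - 0 - sg x) (at x)"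
      by (intro DERIV_diff DERIV_const abs_deriv[OF xm, folded sg_def])
    have dw: "((\<lambda>x. w \<tau> x) has_real_derivative hd (r - \<tau> - \<bar>x - m\<bar>) * (0 - 0 - sg x)) (at x)"
      unfolding w_def by (rule DERIV_chain2[OF dh di])
    have dp: "((\<lambda>x. 2 * ut \<tau> x * ux \<tau> x) has_real_derivative 2 * (utx \<tau> x * ux \<tau> x + ut \<tau> x * uxx \<tau> x)) (at x)"
      by (auto intro!: derivative_eq_intros d_utx d_uxx simp: algebra_simps)
    show ?thesis
      using DERIV_mult[OF dw dp] unfolding Fl_def Fl'_def by (simp add: algebra_simps)
  qed
  have cFl: "continuous_on {m-r..m+r} (Fl \<tau>)" for \<tau>
    unfolding Fl_def w_def by (intro continuous_intros)
  have Flab: "Fl \<tau> (m-r) = 0" "Fl \<tau> (m+r) = 0" if "\<tau> \<in> {0..s}" for \<tau>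
    using that unfolding Fl_def w_def hh_def by auto
  have le: "ft \<tau> x \<le> Fl' \<tau> x + 0" if x: "x \<in> {m-r<..<m+r} - {m}" for \<tau> x
  proof -
    have p: "utt \<tau> x = uxx \<tau> x - V x * u \<tau> x - a x * ut \<tau> x" using pde[of \<tau> x] by linarith
    have et: "et \<tau> x = 2 * (utx \<tau> x * ux \<tau> x + ut \<tau> x * uxx \<tau> x) - 2 * a x * (ut \<tau> x * ut \<tau> x)"
      unfolding et_def p mixed by (simp add: algebra_simps)
    have A: "w \<tau> x * et \<tau> x \<le> w \<tau> x * (2 * (utx \<tau> x * ux \<tau> x + ut \<tau> x * uxx \<tau> x))"
      unfolding et using hh0 apos[of x] by (auto simp: w_def intro!: mult_left_mono)
    have "sg x * (2 * ut \<tau> x * ux \<tau> x) \<le> e \<tau> x"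
    proof -
      have "0 \<le> V x * (u \<tau> x * u \<tau> x)" using Vpos[of x] by auto
      moreover have "0 \<le> (ut \<tau> x - ux \<tau> x) * (ut \<tau> x - ux \<tau> x)" "0 \<le> (ut \<tau> x + ux \<tau> x) * (ut \<tau> x + ux \<tau> x)"
        by auto
      ultimately show ?thesis unfolding e_def sg_def by (auto simp: algebra_simps)
    qed
    then have "hd (r - \<tau> - \<bar>x - m\<bar>) * (sg x * (2 * ut \<tau> x * ux \<tau> x)) \<le> hd (r - \<tau> - \<bar>x - m\<bar>) * e \<tau> x"
      by (rule mult_left_mono) (rule hh0)
    then have B: "- hd (r - \<tau> - \<bar>x - m\<bar>) * e \<tau> x \<le> hd (r - \<tau> - \<bar>x - m\<bar>) * (- sg x) * (2 * ut \<tau> x * ux \<tau> x)"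
      by (simp add: algebra_simps)
    show ?thesis unfolding ft_def Fl'_def using A B by simp
  qed
  have main: "integral {m-r..m+r} (f s) - integral {m-r..m+r} (f 0) \<le> integral {0..s} (\<lambda>\<tau>. integral {m-r..m+r} ((\<lambda>_ _. 0::real) \<tau>))"
    by (rule decay_lemma[where ft=ft and Fl=Fl and Fl'=Fl' and S="{m}"])
       (use s r le in \<open>auto intro!: df cf cft dFl cFl Flab\<close>)
  have f0: "integral {m-r..m+r} (f 0) = 0"
  proof -
    have "integral {m-r..m+r} (f 0) = integral {m-r..m+r} (\<lambda>_. 0::real)"
      by (rule integral_cong) (use z0 in \<open>auto simp: f_def e_def dist_real_def abs_le_iff\<close>)
    then show ?thesis by simp
  qed
  have fnn: "f s x \<ge> 0" for x
    unfolding f_def e_def using hh0 Vpos[of x] by (auto simp: w_def intro!: mult_nonneg_nonneg add_nonneg_nonneg)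
  have cfs: "continuous_on {m-r..m+r} (f s)" by (rule cont_slice2[OF cf])
  have "integral {m-r..m+r} (f s) \<le> 0" using main f0 by simp
  moreover have "integral {m-r..m+r} (f s) \<ge> 0"
    by (rule integral_nonneg[OF integrable_continuous_real[OF cfs]]) (use fnn in auto)
  ultimately have "integral {m-r..m+r} (f s) = 0" by linarith
  then have "\<forall>x\<in>{m-r..m+r}. f s x = 0"
    using integral_eq_0_iff[OF cfs] r fnn by auto
  then have fm: "f s m = 0" using r by auto
  have "w s m > 0" unfolding w_def hh_def using s by auto
  then have em: "e s m = 0" using fm unfolding f_def by auto
  have "0 \<le> V m * (u s m * u s m)" using Vpos[of m] by auto
  then have "ut s m * ut s m = 0 \<and> ux s m * ux s m = 0 \<and> V m * (u s m * u s m) = 0"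
    using em unfolding e_def
    by (smt (verit) zero_le_square)
  then show ?thesis using Vpos[of m] by auto
qed

lemma phase2:
  assumes L: "L > 0" and e1: "e1 > 0" and aL: "\<And>x. \<bar>x\<bar> \<ge> L \<Longrightarrow> a x \<ge> e1" and aA: "\<And>x. a x \<le> A"
  and VV: "\<And>x. V x \<le> Vm" and LV: "16*L^2*Vm < 1" and k: "k \<ge> 4*L^2*e1*A + 1"
  and t: "t \<ge> 0" and R: "R > 0"
  and supp: "\<And>\<tau> x. \<tau> \<in> {0..t} \<Longrightarrow> \<bar>x\<bar> \<ge> R \<Longrightarrow> ut \<tau> x = 0 \<and> ux \<tau> x = 0 \<and> u \<tau> x = 0"
  shows "integral {-R..R} (Dd L e1 a V k u ut ux t) - integral {-R..R} (Dd L e1 a V k u ut ux 0)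
    \<le> integral {0..t} (\<lambda>\<tau>. integral {-R..R} (\<lambda>x. -(e1/16) * ((ut \<tau> x)^2 + (ux \<tau> x)^2 + V x * (u \<tau> x)^2)))"
proof -
  define al where "al = e1/4"
  define psi where "psi x = phi L e1 x * x" for x
  define psd where "psd x = (if \<bar>x\<bar> < L then e1 else 0)" for x
  define D where "D = Dd L e1 a V k u ut ux"
  define Dt where "Dt \<tau> x = utt \<tau> x * psi x * ux \<tau> x + ut \<tau> x * psi x * uxt \<tau> x
     + al * (utt \<tau> x * u \<tau> x + ut \<tau> x * ut \<tau> x) + al/2 * (a x * (2 * u \<tau> x * ut \<tau> x))
     + k * (2 * ut \<tau> x * utt \<tau> x + 2 * ux \<tau> x * uxt \<tau> x + V x * (2 * u \<tau> x * ut \<tau> x)) / 2" for \<tau> x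
  define Fl where "Fl \<tau> x = psi x * ((ux \<tau> x)^2 + (ut \<tau> x)^2) / 2 + al * (u \<tau> x * ux \<tau> x) + k * (ut \<tau> x * ux \<tau> x)" for \<tau> x
  define Fl' where "Fl' \<tau> x = psd x * ((ux \<tau> x)^2 + (ut \<tau> x)^2) / 2 + psi x * (ux \<tau> x * uxx \<tau> x + ut \<tau> x * utx \<tau> x)
     + al * (ux \<tau> x * ux \<tau> x + u \<tau> x * uxx \<tau> x) + k * (utx \<tau> x * ux \<tau> x + ut \<tau> x * uxx \<tau> x)" for \<tau> x
  define g where "g \<tau> x = -(e1/16) * ((ut \<tau> x)^2 + (ux \<tau> x)^2 + V x * (u \<tau> x)^2)" for \<tau> x
  have cpsi[continuous_intros]: "continuous_on S f \<Longrightarrow> continuous_on S (\<lambda>p. psi (f p))" for S and f :: "'z::topological_space \<Rightarrow> real"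
    unfolding psi_def by (intro continuous_intros cont_phi L)
  have cphi[continuous_intros]: "continuous_on S f \<Longrightarrow> continuous_on S (\<lambda>p. phi L e1 (f p))" for S and f :: "'z::topological_space \<Rightarrow> real"
    by (intro cont_phi L)
  have Dpsi: "D \<tau> x = ut \<tau> x * psi x * ux \<tau> x + al * (ut \<tau> x * u \<tau> x)
     + al/2 * (a x * (u \<tau> x)^2) + k * ((ut \<tau> x)^2 + (ux \<tau> x)^2 + V x * (u \<tau> x)^2) / 2" for \<tau> x
    unfolding D_def Dd_def psi_def al_def by simp
  have df: "((\<lambda>\<tau>. D \<tau> x) has_real_derivative Dt \<tau> x) (at \<tau>)" for \<tau> x
    unfolding Dpsi Dt_def
    by (auto intro!: derivative_eq_intros d_ut d_utt d_uxt d_ux simp: algebra_simps)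
  have cf: "continuous_on UNIV (\<lambda>(\<tau>,x). D \<tau> x)"
    unfolding Dpsi by (rule cont_split) (auto intro!: continuous_intros)
  have cft: "continuous_on UNIV (\<lambda>(\<tau>,x). Dt \<tau> x)"
    unfolding Dt_def by (rule cont_split) (auto intro!: continuous_intros)
  have cg: "continuous_on UNIV (\<lambda>(\<tau>,x). g \<tau> x)"
    unfolding g_def by (rule cont_split) (intro continuous_intros)
  have dFl: "((Fl \<tau>) has_real_derivative Fl' \<tau> x) (at x)" if x: "x \<in> {-R<..<R} - {-L, L}" for \<tau> x
  proof -
    have dpsi: "(psi has_real_derivative psd x) (at x)"
      unfolding psi_def psd_def by (rule psi_deriv) (use x L in auto)
    show ?thesis
      unfolding Fl_def[abs_def] Fl'_def
      by (auto intro!: derivative_eq_intros dpsi d_ux d_uxx d_utx simp: algebra_simps)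
  qed
  have cFl: "continuous_on {-R..R} (Fl \<tau>)" for \<tau>
    unfolding Fl_def by (auto intro!: continuous_intros)
  have Flab: "Fl \<tau> (-R) = 0" "Fl \<tau> R = 0" if "\<tau> \<in> {0..t}" for \<tau>
    using supp[OF that, of R] supp[OF that, of "-R"] R unfolding Fl_def by auto
  have le: "Dt \<tau> x \<le> Fl' \<tau> x + g \<tau> x" if x: "x \<in> {-R<..<R} - {-L, L}" for \<tau> x
  proof -
    have p: "utt \<tau> x = uxx \<tau> x - V x * u \<tau> x - a x * ut \<tau> x" using pde[of \<tau> x] by linarith
    have eq: "Dt \<tau> x - Fl' \<tau> x = - psd x * ((ux \<tau> x)^2 + (ut \<tau> x)^2) / 2 - psi x * V x * u \<tau> x * ux \<tau> x
       - psi x * a x * ut \<tau> x * ux \<tau> x - (e1/4) * V x * (u \<tau> x)^2 + (e1/4) * (ut \<tau> x)^2 - (e1/4) * (ux \<tau> x)^2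
       - k * a x * (ut \<tau> x)^2"
      unfolding Dt_def Fl'_def p mixed al_def by (simp add: power2_eq_square field_simps)
    have cs: "psd x = e1 \<or> (psd x = 0 \<and> a x \<ge> e1)"
      using aL[of x] by (auto simp: psd_def)
    have "- psd x * ((ux \<tau> x)^2 + (ut \<tau> x)^2) / 2 - psi x * V x * u \<tau> x * ux \<tau> x
       - psi x * a x * ut \<tau> x * ux \<tau> x - (e1/4) * V x * (u \<tau> x)^2 + (e1/4) * (ut \<tau> x)^2 - (e1/4) * (ux \<tau> x)^2
       - k * a x * (ut \<tau> x)^2 \<le> - (e1/16) * ((ut \<tau> x)^2 + (ux \<tau> x)^2 + V x * (u \<tau> x)^2)"
      by (rule key_ineq[where A=A and Vm=Vm and L=L])
         (use psi_bound[OF L e1, of x] Vpos[of x] VV[of x] LV apos[of x] aA[of x] k e1 L cs in \<open>auto simp: psi_def\<close>)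
    then show ?thesis using eq unfolding g_def by linarith
  qed
  have "integral {-R..R} (D t) - integral {-R..R} (D 0) \<le> integral {0..t} (\<lambda>\<tau>. integral {-R..R} (g \<tau>))"
    by (rule decay_lemma[where ft=Dt and Fl=Fl and Fl'=Fl' and S="{-L, L}"])
       (use t R le in \<open>auto intro!: df cf cft cg dFl cFl Flab\<close>)
  then show ?thesis unfolding D_def g_def .
qed

lemma support:
  assumes R0: "R0 \<ge> 0" and z: "\<And>y. \<bar>y\<bar> > R0 \<Longrightarrow> ut 0 y = 0 \<and> ux 0 y = 0 \<and> u 0 y = 0"
  and s: "s \<ge> 0" and x: "\<bar>x\<bar> > R0 + s"
  shows "ut s x = 0 \<and> ux s x = 0 \<and> u s x = 0"
proof -
  define d where "d = (\<bar>x\<bar> - R0 - s)/2"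
  have d: "d > 0" using x by (simp add: d_def)
  show ?thesis
  proof (rule local_zero[where r="s+d" and m=x])
    fix y assume "\<bar>y - x\<bar> \<le> s + d"
    moreover have "\<bar>x\<bar> \<le> \<bar>y\<bar> + \<bar>y - x\<bar>" using abs_triangle_ineq[of y "x - y"] by (simp add: abs_minus_commute)
    moreover have "\<bar>x\<bar> - s - d = R0 + d" unfolding d_def by (simp add: field_simps)
    ultimately have "\<bar>y\<bar> > R0" using d by linarith
    then show "ut 0 y = 0 \<and> ux 0 y = 0 \<and> u 0 y = 0" by (rule z)
  qed (use s d in auto)
qed

lemma sol_bound:
  assumes L: "L > 0" and e1: "e1 > 0" and aL: "\<And>x. \<bar>x\<bar> \<ge> L \<Longrightarrow> a x \<ge> e1" and aA: "\<And>x. a x \<le> A"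
  and VV: "\<And>x. V x \<le> Vm" and LV: "16*L^2*Vm < 1" and k: "k \<ge> 4*L^2*e1*A + 1"
  and R0: "R0 \<ge> 0" and z: "\<And>y. \<bar>y\<bar> > R0 \<Longrightarrow> ut 0 y = 0 \<and> ux 0 y = 0 \<and> u 0 y = 0"
  and t: "t \<ge> 0"
  shows "Gk L e1 a V k u ut ux t + (e1/8) * (LINT s:{0..t}|lborel. energy V u ut ux s)
     \<le> integral {-(R0+t+1)..R0+t+1} (Dd L e1 a V k u ut ux 0)"
proof -
  define R where "R = R0 + t + 1"
  have Rpos: "R > 0" using R0 t by (simp add: R_def)
  have supp: "ut \<tau> x = 0 \<and> ux \<tau> x = 0 \<and> u \<tau> x = 0" if "\<tau> \<in> {0..t}" "\<bar>x\<bar> \<ge> R" for \<tau> x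
    by (rule support[OF R0 z]) (use that in \<open>auto simp: R_def\<close>)
  have P2: "integral {-R..R} (Dd L e1 a V k u ut ux t) - integral {-R..R} (Dd L e1 a V k u ut ux 0)
    \<le> integral {0..t} (\<lambda>\<tau>. integral {-R..R} (\<lambda>x. -(e1/16) * ((ut \<tau> x)^2 + (ux \<tau> x)^2 + V x * (u \<tau> x)^2)))"
    using phase2[OF L e1 aL aA VV LV k t Rpos supp] by simp
  define e where "e \<tau> x = (ut \<tau> x)^2 + (ux \<tau> x)^2 + V x * (u \<tau> x)^2" for \<tau> x
  define Ei where "Ei \<tau> = integral {-R..R} (e \<tau>)" for \<tau>
  have intI: "(f has_integral integral {-R..R} f) {-R..R}" if "continuous_on UNIV f" for f :: "real \<Rightarrow> real"
    by (intro integrable_integral integrable_continuous_real continuous_on_subset[OF that]) auto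
  have en: "energy V u ut ux \<tau> = Ei \<tau> / 2" if \<tau>: "\<tau> \<in> {0..t}" for \<tau>
  proof -
    have sq: "(\<lambda>x. (sqrt (V x) * u \<tau> x)^2) = (\<lambda>x. V x * (u \<tau> x)^2)"
      using Vpos by (auto simp: power_mult_distrib less_imp_le)
    have i1: "L2sq (ut \<tau>) = integral {-R..R} (\<lambda>x. (ut \<tau> x)^2)"
      unfolding L2sq_def by (rule lint_eq) (use supp[OF \<tau>] in \<open>auto intro!: continuous_intros\<close>)
    have i2: "L2sq (ux \<tau>) = integral {-R..R} (\<lambda>x. (ux \<tau> x)^2)"
      unfolding L2sq_def by (rule lint_eq) (use supp[OF \<tau>] in \<open>auto intro!: continuous_intros\<close>)
    have i3: "L2sq (\<lambda>x. sqrt (V x) * u \<tau> x) = integral {-R..R} (\<lambda>x. V x * (u \<tau> x)^2)"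
      unfolding L2sq_def sq by (rule lint_eq) (use supp[OF \<tau>] in \<open>auto intro!: continuous_intros\<close>)
    have "((\<lambda>x. (ut \<tau> x)^2 + (ux \<tau> x)^2 + V x * (u \<tau> x)^2) has_integral
        (integral {-R..R} (\<lambda>x. (ut \<tau> x)^2) + integral {-R..R} (\<lambda>x. (ux \<tau> x)^2) + integral {-R..R} (\<lambda>x. V x * (u \<tau> x)^2))) {-R..R}"
      by (intro has_integral_add intI) (auto intro!: continuous_intros)
    then have "Ei \<tau> = integral {-R..R} (\<lambda>x. (ut \<tau> x)^2) + integral {-R..R} (\<lambda>x. (ux \<tau> x)^2) + integral {-R..R} (\<lambda>x. V x * (u \<tau> x)^2)"
      unfolding Ei_def e_def by (rule integral_unique)
    then show ?thesis unfolding energy_def i1 i2 i3 by simp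
  qed
  have cEi: "continuous_on UNIV Ei"
  proof -
    have "continuous_on UNIV (\<lambda>x. integral (cbox (-R) R) (e x))"
      by (rule integral_continuous_on_param) (auto simp: e_def case_prod_unfold intro!: continuous_intros)
    then show ?thesis unfolding Ei_def[abs_def] by (simp add: cbox_interval)
  qed
  have LE: "(LINT s:{0..t}|lborel. energy V u ut ux s) = integral {0..t} (\<lambda>s. Ei s / 2)"
  proof -
    have "(LINT s:{0..t}|lborel. energy V u ut ux s) = (LINT s:{0..t}|lborel. Ei s / 2)"
      by (rule set_lebesgue_integral_cong) (auto simp: en)
    also have "\<dots> = integral {0..t} (\<lambda>s. Ei s / 2)"
      by (rule set_int_eq) (auto intro!: continuous_intros continuous_on_subset[OF cEi])
    finally show ?thesis .
  qed
  have gi: "integral {0..t} (\<lambda>\<tau>. integral {-R..R} (\<lambda>x. -(e1/16) * ((ut \<tau> x)^2 + (ux \<tau> x)^2 + V x * (u \<tau> x)^2)))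
      = - (e1/8 * integral {0..t} (\<lambda>s. Ei s / 2))"
  proof -
    have "integral {0..t} (\<lambda>\<tau>. integral {-R..R} (\<lambda>x. -(e1/16) * ((ut \<tau> x)^2 + (ux \<tau> x)^2 + V x * (u \<tau> x)^2)))
       = integral {0..t} (\<lambda>\<tau>. -(e1/16) * Ei \<tau>)"
      unfolding Ei_def e_def by simp
    also have "\<dots> = - (e1/8 * integral {0..t} (\<lambda>s. Ei s / 2))" by simp
    finally show ?thesis .
  qed
  have Gt: "Gk L e1 a V k u ut ux t = integral {-R..R} (Dd L e1 a V k u ut ux t)"
  proof -
    have tt: "t \<in> {0..t}" using t by auto
    have j1: "(LINT x|lborel. ut t x * phi L e1 x * x * ux t x) = integral {-R..R} (\<lambda>x. ut t x * phi L e1 x * x * ux t x)"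
      by (rule lint_eq) (use supp[OF tt] L in \<open>auto intro!: continuous_intros cont_phi\<close>)
    have j2: "L2inner (ut t) (u t) = integral {-R..R} (\<lambda>x. ut t x * u t x)"
      unfolding L2inner_def by (rule lint_eq) (use supp[OF tt] in \<open>auto intro!: continuous_intros\<close>)
    have j3: "(LINT x|lborel. a x * (u t x)^2) = integral {-R..R} (\<lambda>x. a x * (u t x)^2)"
      by (rule lint_eq) (use supp[OF tt] in \<open>auto intro!: continuous_intros\<close>)
    have "((\<lambda>x. ut t x * phi L e1 x * x * ux t x + e1/4 * (ut t x * u t x) + e1/4/2 * (a x * (u t x)^2) + k * e t x / 2)
       has_integral (integral {-R..R} (\<lambda>x. ut t x * phi L e1 x * x * ux t x) + e1/4 * integral {-R..R} (\<lambda>x. ut t x * u t x)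
         + e1/4/2 * integral {-R..R} (\<lambda>x. a x * (u t x)^2) + k * Ei t / 2)) {-R..R}"
      unfolding Ei_def
      by (intro has_integral_add has_integral_mult_right has_integral_divide intI)
         (use L in \<open>auto simp: e_def intro!: continuous_intros cont_phi\<close>)
    then have "integral {-R..R} (Dd L e1 a V k u ut ux t) = integral {-R..R} (\<lambda>x. ut t x * phi L e1 x * x * ux t x) + e1/4 * integral {-R..R} (\<lambda>x. ut t x * u t x)
         + e1/4/2 * integral {-R..R} (\<lambda>x. a x * (u t x)^2) + k * Ei t / 2"
      unfolding Dd_def[abs_def] e_def by (intro integral_unique) simp
    then show ?thesis unfolding Gk_def Let_def j1 j2 j3 en[OF tt] by simp
  qed
  have "Gk L e1 a V k u ut ux t + e1/8 * integral {0..t} (\<lambda>s. Ei s / 2) \<le> integral {-R..R} (Dd L e1 a V k u ut ux 0)"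
    using P2 Gt gi by linarith
  then show ?thesis unfolding LE by (simp add: R_def)
qed

end


lemma sol_wsol:
  assumes "is_solution V a u0 u1 u ut ux" "continuous_on UNIV V" "continuous_on UNIV a"
    "\<forall>x. V x > 0" "\<forall>x. a x \<ge> 0"
  shows "\<exists>utt utx uxt uxx. wsol V a u ut ux utt utx uxt uxx \<and> (\<forall>x. u 0 x = u0 x) \<and> (\<forall>x. ut 0 x = u1 x)"
  using assms unfolding is_solution_def wsol_def
  apply (elim exE conjE)
  subgoal for utt utx uxt uxx
    by (rule exI[of _ utt], rule exI[of _ utx], rule exI[of _ uxt], rule exI[of _ uxx]) auto
  done

lemma main_fixed:
  fixes L e1 :: real and a V :: "real \<Rightarrow> real"
  assumes L: "L > 0" and Ba: "BC a" and apos: "\<forall>x. a x \<ge> 0" and e1: "e1 > 0"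
    and aL: "\<forall>x. \<bar>x\<bar> \<ge> L \<longrightarrow> a x \<ge> e1"
    and BV: "BC1 V" and Vpos: "\<forall>x. V x > 0" and Vd: "\<forall>x. deriv V x * x \<le> 0"
    and V0: "V 0 < 1 / (4 * (4*L^2))"
  shows "\<exists>K \<ge> 2. \<forall>k \<ge> K. \<exists>\<eta>0 > 0. \<exists>C > 0.
            \<forall>u0 u1 u ut ux. smooth_compact u0 \<and> smooth_compact u1 \<and>
              is_solution V a u0 u1 u ut ux \<longrightarrow>
              (\<forall>t \<ge> 0.
                 Gk L e1 a V k u ut ux t + \<eta>0 * (LINT s:{0..t}|lborel. energy V u ut ux s)
                 \<le> C * (L2sq u0 + L2sq (deriv u0) + L2sq u1
                        + (LINT s:{0..t}|lborel. (LINT x|lborel. a x * (u s x)^2))))"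
proof -
  obtain A where aA: "\<And>x. a x \<le> A"
    using Ba unfolding BC_def bounded_real by (meson abs_le_D1 rangeI)
  have ca: "continuous_on UNIV a" using Ba BC_def by auto
  have cV: "continuous_on UNIV V" using BV BC_def BC1_def by auto
  have Vdiff: "(V has_real_derivative deriv V x) (at x)" for x
  proof -
    have "V differentiable (at x)" using BV unfolding BC1_def differentiable_on_def by auto
    then show ?thesis using DERIV_deriv_iff_real_differentiable by blast
  qed
  have VV: "V x \<le> V 0" for x by (rule V_max[OF Vdiff]) (use Vd in auto)
  have LV: "16*L^2*V 0 < 1" using V0 L by (simp add: field_simps)
  define K where "K = max 2 (4*L^2*e1*A + 1)"
  show ?thesis
  proof (rule exI[of _ K], intro conjI allI impI)
    show "K \<ge> 2" by (simp add: K_def)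
    fix k assume kK: "k \<ge> K"
    then have k: "k \<ge> 4*L^2*e1*A + 1" and k0: "k \<ge> 0" by (auto simp: K_def)
    define C where "C = L*e1 + e1 + e1*\<bar>A\<bar> + k + k*V 0 + 1"
    have "0 \<le> k * V 0" "0 \<le> e1*\<bar>A\<bar>" "0 < L*e1" using k0 Vpos[rule_format, of 0] e1 L by auto
    then have C0: "C > 0" unfolding C_def using e1 k0 by linarith
    have main: "\<forall>u0 u1 u ut ux. smooth_compact u0 \<and> smooth_compact u1 \<and>
              is_solution V a u0 u1 u ut ux \<longrightarrow>
              (\<forall>t \<ge> 0.
                 Gk L e1 a V k u ut ux t + e1/8 * (LINT s:{0..t}|lborel. energy V u ut ux s)
                 \<le> C * (L2sq u0 + L2sq (deriv u0) + L2sq u1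
                        + (LINT s:{0..t}|lborel. (LINT x|lborel. a x * (u s x)^2))))"
    proof (intro allI impI)
      fix u0 u1 :: "real \<Rightarrow> real" and u ut ux :: "real \<Rightarrow> real \<Rightarrow> real" and t :: real
      assume H: "smooth_compact u0 \<and> smooth_compact u1 \<and> is_solution V a u0 u1 u ut ux" and t: "0 \<le> t"
      obtain utt utx uxt uxx where ws: "wsol V a u ut ux utt utx uxt uxx"
        and u00: "\<And>x. u 0 x = u0 x" and ut00: "\<And>x. ut 0 x = u1 x"
        using sol_wsol[of V a u0 u1 u ut ux] H cV ca Vpos apos by blast
      interpret w: wsol V a u ut ux utt utx uxt uxx by (rule ws)
      obtain R1 where R1: "\<And>x. \<bar>x\<bar> > R1 \<Longrightarrow> u0 x = 0" using H unfolding smooth_compact_def by blast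
      obtain R2 where R2: "\<And>x. \<bar>x\<bar> > R2 \<Longrightarrow> u1 x = 0" using H unfolding smooth_compact_def by blast
      define R0 where "R0 = max (max R1 R2) 0"
      have R0: "R0 \<ge> 0" by (simp add: R0_def)
      have uu0: "(\<lambda>y. u 0 y) = u0" using u00 by auto
      have du0: "(u0 has_real_derivative ux 0 y) (at y)" for y
        using w.d_ux[of 0 y] unfolding uu0 .
      have dux0: "deriv u0 y = ux 0 y" for y using DERIV_imp_deriv[OF du0] .
      have z: "ut 0 y = 0 \<and> ux 0 y = 0 \<and> u 0 y = 0" if y: "\<bar>y\<bar> > R0" for y
      proof -
        have "u0 y = 0" "u1 y = 0" using R1 R2 y by (auto simp: R0_def)
        moreover have "ux 0 y = 0"
        proof -
          have op: "open {z. R0 < \<bar>z\<bar>}" by (intro open_Collect_less continuous_intros)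
          have "((\<lambda>_. 0) has_real_derivative 0) (at y)" by simp
          then have "(u0 has_real_derivative 0) (at y)"
            by (rule has_field_derivative_transform_within_open[where S="{z. R0 < \<bar>z\<bar>}"])
               (use y R1 op in \<open>auto simp: R0_def\<close>)
          then show ?thesis using DERIV_unique[OF du0] by blast
        qed
        ultimately show ?thesis using u00 ut00 by simp
      qed
      define R where "R = R0 + t + 1"
      have SB: "Gk L e1 a V k u ut ux t + (e1/8) * (LINT s:{0..t}|lborel. energy V u ut ux s)
         \<le> integral {-R..R} (Dd L e1 a V k u ut ux 0)"
        unfolding R_def
        by (rule w.sol_bound[where A=A and Vm="V 0"]) (use L e1 aL aA VV LV k R0 z t in auto)
      have zR: "\<bar>x\<bar> \<ge> R \<Longrightarrow> u0 x = 0 \<and> u1 x = 0 \<and> deriv u0 x = 0" for x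
        using z[of x] t u00 ut00 dux0 by (auto simp: R_def)
      have cu0: "continuous_on UNIV u0" using w.cu[of UNIV "\<lambda>x. 0" "\<lambda>x. x"] unfolding uu0 by simp
      have cu1: "continuous_on UNIV u1"
      proof -
        have "continuous_on UNIV (\<lambda>x. ut 0 x)" by (intro continuous_intros)
        then show ?thesis using ut00 by simp
      qed
      have cdu0: "continuous_on UNIV (deriv u0)"
      proof -
        have "continuous_on UNIV (\<lambda>x. ux 0 x)" by (intro continuous_intros)
        then show ?thesis using dux0 by (simp add: fun_eq_iff[symmetric])
      qed
      have I0: "integral {-R..R} (Dd L e1 a V k u ut ux 0) \<le> C * (L2sq u0 + L2sq (deriv u0) + L2sq u1)"
      proof -
        have l1: "L2sq u0 = integral {-R..R} (\<lambda>x. (u0 x)^2)"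
          unfolding L2sq_def by (rule lint_eq) (use zR cu0 in \<open>auto intro!: continuous_intros\<close>)
        have l2: "L2sq (deriv u0) = integral {-R..R} (\<lambda>x. (deriv u0 x)^2)"
          unfolding L2sq_def by (rule lint_eq) (use zR cdu0 in \<open>auto intro!: continuous_intros\<close>)
        have l3: "L2sq u1 = integral {-R..R} (\<lambda>x. (u1 x)^2)"
          unfolding L2sq_def by (rule lint_eq) (use zR cu1 in \<open>auto intro!: continuous_intros\<close>)
        have intI: "(f has_integral integral {-R..R} f) {-R..R}" if "continuous_on UNIV f" for f :: "real \<Rightarrow> real"
          by (intro integrable_integral integrable_continuous_real continuous_on_subset[OF that]) auto
        have hs: "((\<lambda>x. C * ((u0 x)^2 + (deriv u0 x)^2 + (u1 x)^2)) has_integral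
            C * (integral {-R..R} (\<lambda>x. (u0 x)^2) + integral {-R..R} (\<lambda>x. (deriv u0 x)^2) + integral {-R..R} (\<lambda>x. (u1 x)^2))) {-R..R}"
          by (intro has_integral_mult_right has_integral_add intI) (use cu0 cu1 cdu0 in \<open>auto intro!: continuous_intros\<close>)
        have hd: "(Dd L e1 a V k u ut ux 0 has_integral integral {-R..R} (Dd L e1 a V k u ut ux 0)) {-R..R}"
          unfolding Dd_def[abs_def] by (intro intI) (use L in \<open>auto intro!: continuous_intros cont_phi\<close>)
        have pw: "Dd L e1 a V k u ut ux 0 x \<le> C * ((u0 x)^2 + (deriv u0 x)^2 + (u1 x)^2)" for x
        proof -
          have "u1 x * (phi L e1 x * x) * deriv u0 x + e1/4 * (u1 x * u0 x) + e1/4/2 * (a x * (u0 x)^2)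
              + k * ((u1 x)^2 + (deriv u0 x)^2 + V x * (u0 x)^2) / 2
              \<le> (L*e1 + e1 + e1*\<bar>A\<bar> + k + k*V 0 + 1) * ((u0 x)^2 + (deriv u0 x)^2 + (u1 x)^2)"
            by (rule init_bound) (use psi_bound[OF L e1, of x] apos aA Vpos VV k0 e1 L in auto)
          then show ?thesis unfolding Dd_def C_def u00 ut00 dux0[symmetric] by (simp add: mult.assoc)
        qed
        have "integral {-R..R} (Dd L e1 a V k u ut ux 0) \<le> C * (integral {-R..R} (\<lambda>x. (u0 x)^2) + integral {-R..R} (\<lambda>x. (deriv u0 x)^2) + integral {-R..R} (\<lambda>x. (u1 x)^2))"
          by (rule has_integral_le[OF hd hs]) (rule pw)
        then show ?thesis unfolding l1 l2 l3 .
      qed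
      have N: "0 \<le> (LINT s:{0..t}|lborel. (LINT x|lborel. a x * (u s x)^2))"
        unfolding set_lebesgue_integral_def
        by (intro integral_nonneg_AE AE_I2 mult_nonneg_nonneg) (auto intro!: integral_nonneg_AE AE_I2 mult_nonneg_nonneg simp: apos)
      have "C * (L2sq u0 + L2sq (deriv u0) + L2sq u1) \<le> C * (L2sq u0 + L2sq (deriv u0) + L2sq u1
                        + (LINT s:{0..t}|lborel. (LINT x|lborel. a x * (u s x)^2)))"
        using N C0 by (intro mult_left_mono) auto
      then show "Gk L e1 a V k u ut ux t + e1/8 * (LINT s:{0..t}|lborel. energy V u ut ux s)
                 \<le> C * (L2sq u0 + L2sq (deriv u0) + L2sq u1
                        + (LINT s:{0..t}|lborel. (LINT x|lborel. a x * (u s x)^2)))"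
        using SB I0 by linarith
    qed
    then show "\<exists>\<eta>0>0. \<exists>C>0. \<forall>u0 u1 u ut ux. smooth_compact u0 \<and> smooth_compact u1 \<and>
              is_solution V a u0 u1 u ut ux \<longrightarrow>
              (\<forall>t \<ge> 0.
                 Gk L e1 a V k u ut ux t + \<eta>0 * (LINT s:{0..t}|lborel. energy V u ut ux s)
                 \<le> C * (L2sq u0 + L2sq (deriv u0) + L2sq u1
                        + (LINT s:{0..t}|lborel. (LINT x|lborel. a x * (u s x)^2))))"
      using e1 C0 by (intro exI[of _ "e1/8"] conjI exI[of _ C]) auto
  qed
qed

theorem lemma2p3:
  shows "\<exists>Cstar :: real \<Rightarrow> real. \<forall>L > 0. Cstar L > 0 \<and>
    (\<forall>(\<epsilon>1::real) (a::real \<Rightarrow> real) (V::real \<Rightarrow> real).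
      BC a \<and> (\<forall>x. a x \<ge> 0) \<and> \<epsilon>1 > 0 \<and> (\<forall>x. \<bar>x\<bar> \<ge> L \<longrightarrow> a x \<ge> \<epsilon>1) \<and>
      BC1 V \<and> (\<forall>x. V x > 0) \<and> (\<forall>x. deriv V x * x \<le> 0) \<and>
      V 0 < 1 / (4 * Cstar L)
      \<longrightarrow> (\<exists>K \<ge> 2. \<forall>k \<ge> K. \<exists>\<eta>0 > 0. \<exists>C > 0.
            \<forall>u0 u1 u ut ux. smooth_compact u0 \<and> smooth_compact u1 \<and>
              is_solution V a u0 u1 u ut ux \<longrightarrow>
              (\<forall>t \<ge> 0.
                 Gk L \<epsilon>1 a V k u ut ux t + \<eta>0 * (LINT s:{0..t}|lborel. energy V u ut ux s)
                 \<le> C * (L2sq u0 + L2sq (deriv u0) + L2sq u1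
                        + (LINT s:{0..t}|lborel. (LINT x|lborel. a x * (u s x)^2))))))"
  by (rule exI[of _ "\<lambda>L. 4*L^2"]) (auto intro!: main_fixed)

end
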